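(* Let $G=\operatorname{Gp}\langle X\mid R\rangle$ be a group, and let $\Re$ be a complete rewriting system for $G$ on the alphabet $X\cup X^{-1}$ which satisfies the condition $C^{+}$. Let $M=\operatorname{Mon}\langle X\mid \Re^{+}\rangle$ be the monoid presented by the generators $X$ and the relations $l=r$ for $(l\rightarrow r)\in\Re^{+}$. Then the monoid homomorphism $M\to G$ induced by the identity on $X$ is injective, i.e. for positive words $u,v\in X^{*}$, $u=v$ in $G$ implies $u=v$ in $M$; so $M$ embeds into $G$ as the submonoid of $G$ represented by positive words. In particular, any monoid $N$ isomorphic to $M$ embeds into $G$.
   Context: A rewriting system on an alphabet $\Sigma$ is a set of ordered pairs (rules) $l\rightarrow r$ in $\Sigma^{*}\times\Sigma^{*}$; a word $ulv$ reduces to $urv$ for any rule $l\rightarrow r$. $\Re$ is terminating if there is no infinite chain of reductions, confluent if any two words with a common ancestor under $\rightarrow^{*}$ have a common descendant, and complete if terminating and confluent. $\equiv_{\Re}$ denotes the congruence on $\Sigma^{*}$ generated by the rules of $\Re$. The monoid presentation of $G$ is $\operatorname{Mon}\langle X\cup X^{-1}\mid R\cup R_{0}\rangle$ with $R_{0}=\{xx^{-1}=1,\ x^{-1}x=1 : x\in X\}$; a rewriting system for $G$ is a rewriting system $\Re$ on $X\cup X^{-1}$ whose congruence $\equiv_{\Re}$ equals the congruence generated by $R\cup R_{0}$. A word in $(X\cup X^{-1})^{*}$ is positive if it lies in $X^{*}$ (the empty word $1$ counts as positive). $\Re^{+}$ denotes the set of all rules of $\Re$ whose left-hand side is a positive word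 (rules $l\rightarrow 1$ with $l$ positive are allowed). $\Re$ satisfies the condition $C^{+}$ if $\Re^{+}\neq\emptyset$ and every rule of $\Re$ with positive left-hand side has a positive right-hand side. *)

theory Defs
  imports Main
begin

text \<open>Letters of the alphabet X \<union> X^{-1}: Pos x stands for x, Neg x for x^{-1}.
  The generating set X is the type 'a.\<close>
datatype 'a letter = Pos 'a | Neg 'a

type_synonym 'b rws = "('b list \<times> 'b list) set"

definition rstep :: "'b rws \<Rightarrow> ('b list \<times> 'b list) set" where
  "rstep S = {(u @ l @ v, u @ r @ v) | u l r v. (l, r) \<in> S}"

definition rcong :: "'b rws \<Rightarrow> ('b list \<times> 'b list) set" where
  "rcong S = (rstep S \<union> (rstep S)\<inverse>)\<^sup>*"

definition terminating :: "'b rws \<Rightarrow> bool" where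
  "terminating S \<longleftrightarrow> \<not> (\<exists>f :: nat \<Rightarrow> 'b list. \<forall>i. (f i, f (Suc i)) \<in> rstep S)"

definition confluent :: "'b rws \<Rightarrow> bool" where
  "confluent S \<longleftrightarrow> (\<forall>w a b. (w, a) \<in> (rstep S)\<^sup>* \<and> (w, b) \<in> (rstep S)\<^sup>* \<longrightarrow>
       (\<exists>c. (a, c) \<in> (rstep S)\<^sup>* \<and> (b, c) \<in> (rstep S)\<^sup>*))"

definition complete :: "'b rws \<Rightarrow> bool" where
  "complete S \<longleftrightarrow> terminating S \<and> confluent S"

definition R0 :: "'a letter rws" where
  "R0 = {([Pos x, Neg x], []) | x. True} \<union> {([Neg x, Pos x], []) | x. True}"

definition positive :: "'a letter list \<Rightarrow> bool" where
  "positive w \<longleftrightarrow> (\<forall>c \<in> set w. \<exists>x. c = Pos x)"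

definition pos_rules :: "'a letter rws \<Rightarrow> 'a letter rws" where
  "pos_rules S = {(l, r) \<in> S. positive l}"

definition cond_C_plus :: "'a letter rws \<Rightarrow> bool" where
  "cond_C_plus S \<longleftrightarrow> pos_rules S \<noteq> {} \<and> (\<forall>(l, r) \<in> pos_rules S. positive r)"

text \<open>A rewriting system for G = Gp<X | R>: its congruence equals that of R \<union> R0.\<close>
definition rws_for_group :: "'a letter rws \<Rightarrow> 'a letter rws \<Rightarrow> bool" where
  "rws_for_group S R \<longleftrightarrow> rcong S = rcong (R \<union> R0)"

text \<open>The relations of M = Mon<X | Re+>, viewed as pairs of words over X.\<close>
definition mon_rels :: "'a letter rws \<Rightarrow> 'a rws" where
  "mon_rels S = {(l, r). (map Pos l, map Pos r) \<in> pos_rules S}"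

end

theory Submission
  imports Defs
begin

lemma cr:
  assumes c: "confluent S" and ab: "(a, b) \<in> (rstep S \<union> (rstep S)\<inverse>)\<^sup>*"
  shows "\<exists>c. (a, c) \<in> (rstep S)\<^sup>* \<and> (b, c) \<in> (rstep S)\<^sup>*"
  using ab
proof (induction rule: rtrancl_induct)
  case base then show ?case by blast
next
  case (step b b')
  then obtain c0 where h: "(a, c0) \<in> (rstep S)\<^sup>*" "(b, c0) \<in> (rstep S)\<^sup>*" by blast
  from step(2) show ?case
  proof
    assume "(b, b') \<in> rstep S"
    then have "(b, b') \<in> (rstep S)\<^sup>*" by blast
    with h c obtain d where "(c0, d) \<in> (rstep S)\<^sup>*" "(b', d) \<in> (rstep S)\<^sup>*"
      unfolding confluent_def by blast
    with h show ?thesis by (meson rtrancl_trans)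
  next
    assume "(b, b') \<in> (rstep S)\<inverse>"
    then have "(b', b) \<in> rstep S" by simp
    with h show ?thesis by (meson converse_rtrancl_into_rtrancl)
  qed
qed

lemma positive_map: "positive r \<Longrightarrow> \<exists>r'. r = map Pos r'"
proof (induction r)
  case Nil then show ?case by simp
next
  case (Cons a r)
  then obtain x where "a = Pos x" unfolding positive_def by auto
  moreover from Cons have "positive r" unfolding positive_def by auto
  with Cons obtain r' where "r = map Pos r'" by blast
  ultimately show ?case by (metis list.simps(9))
qed

lemma positive_mapI: "positive (map Pos r)"
  unfolding positive_def by auto

lemma pos_red:
  assumes C: "cond_C_plus Re" and st: "(map Pos u, w) \<in> (rstep Re)\<^sup>*"
  shows "\<exists>w'. w = map Pos w' \<and> (u, w') \<in> (rstep (mon_rels Re))\<^sup>*"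
  using st
proof (induction rule: rtrancl_induct)
  case base then show ?case by blast
next
  case (step w1 w2)
  then obtain w' where w': "w1 = map Pos w'" "(u, w') \<in> (rstep (mon_rels Re))\<^sup>*" by blast
  from step(2) obtain x l r y where e: "w1 = x @ l @ y" "w2 = x @ r @ y" "(l, r) \<in> Re"
    unfolding rstep_def by blast
  from e w' obtain x' l' y' where m: "x = map Pos x'" "l = map Pos l'" "y = map Pos y'"
    "w' = x' @ l' @ y'"
    by (auto simp: map_eq_append_conv) (metis map_eq_append_conv)
  have "(l, r) \<in> pos_rules Re" using e(3) m(2) positive_mapI unfolding pos_rules_def by blast
  with C have "positive r" unfolding cond_C_plus_def by blast
  then obtain r' where r': "r = map Pos r'" using positive_map by blast
  have "(l', r') \<in> mon_rels Re" unfolding mon_rels_def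
    using \<open>(l, r) \<in> pos_rules Re\<close> m(2) r' by simp
  then have "(w', x' @ r' @ y') \<in> rstep (mon_rels Re)" unfolding rstep_def m(4) by blast
  with w'(2) have "(u, x' @ r' @ y') \<in> (rstep (mon_rels Re))\<^sup>*" by simp
  moreover have "w2 = map Pos (x' @ r' @ y')" using e(2) m r' by simp
  ultimately show ?case by blast
qed

theorem theorem3p7:
  fixes R Re :: "'a letter rws"
  assumes "rws_for_group Re R"
    and "complete Re"
    and "cond_C_plus Re"
  shows "\<forall>u v :: 'a list. (map Pos u, map Pos v) \<in> rcong (R \<union> R0) \<longrightarrow>
           (u, v) \<in> rcong (mon_rels Re)"
proof (intro allI impI)
  fix u v :: "'a list"
  assume "(map Pos u, map Pos v) \<in> rcong (R \<union> R0)"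
  then have "(map Pos u, map Pos v) \<in> (rstep Re \<union> (rstep Re)\<inverse>)\<^sup>*"
    using assms(1) unfolding rws_for_group_def rcong_def by simp
  with assms(2) obtain c where c: "(map Pos u, c) \<in> (rstep Re)\<^sup>*" "(map Pos v, c) \<in> (rstep Re)\<^sup>*"
    using cr unfolding complete_def by blast
  from pos_red[OF assms(3) c(1)] obtain w1 where w1: "c = map Pos w1" "(u, w1) \<in> (rstep (mon_rels Re))\<^sup>*" by blast
  from pos_red[OF assms(3) c(2)] obtain w2 where w2: "c = map Pos w2" "(v, w2) \<in> (rstep (mon_rels Re))\<^sup>*" by blast
  have "w1 = w2" using w1(1) w2(1) by (simp add: inj_map_eq_map inj_def)
  let ?E = "rstep (mon_rels Re) \<union> (rstep (mon_rels Re))\<inverse>"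
  have a: "(u, w1) \<in> ?E\<^sup>*" using w1(2) by (rule rtrancl_mono[THEN subsetD, rotated]) blast
  have b: "(v, w1) \<in> ?E\<^sup>*" using w2(2) \<open>w1 = w2\<close> by (metis rtrancl_mono[of "rstep (mon_rels Re)" ?E] Un_upper1 subsetD)
  have "(w1, v) \<in> ?E\<^sup>*"
  proof -
    have "(w1, v) \<in> (?E\<inverse>)\<^sup>*" using b by (simp add: rtrancl_converse)
    moreover have "?E\<inverse> = ?E" by (simp add: converse_Un Un_commute)
    ultimately show ?thesis by simp
  qed
  with a show "(u, v) \<in> rcong (mon_rels Re)" unfolding rcong_def by simp
qed

end
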